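(* Let $s\in[0,1]$ and let $(L_n)_{n\ge1}$, $(U_n)_{n\ge1}$ be random variables on a common probability space such that, almost surely, for every $n\ge1$: $L_n\le U_n$; $L_n\in[0,1]$ and $U_n\in[0,1]$; and (for $n\ge2$) $L_{n-1}\le L_n$ and $U_{n-1}\ge U_n$. Suppose moreover that $l_n:=\mathbb{E}L_n$ is nondecreasing with $l_n\to s$ and $u_n:=\mathbb{E}U_n$ is nonincreasing with $u_n\to s$. Let $G_0\sim U(0,1)$ be independent of $(L_n,U_n)_{n\ge1}$. Define $$N:=\inf\{n\ge1:\ G_0\le L_n\ \text{or}\ G_0>U_n\},$$ and $C_s:=1$ if $G_0\le L_N$ and $C_s:=0$ otherwise (i.e. if $G_0>U_N$). Then $N<\infty$ almost surely, $\mathbb{P}(C_s=1)=s$, and $\mathbb{P}(N>n)=u_n-l_n$ for every $n\ge1$.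
   Context: This formalizes "Algorithm 3": draw $G_0\sim U(0,1)$ once, then for $n=1,2,\dots$ obtain $L_n,U_n$; output $1$ if $G_0\le L_n$, output $0$ if $G_0>U_n$, otherwise continue with $n+1$. The variables $L_n,U_n$ are not assumed to satisfy $L_n\le s\le U_n$. *)

theory Defs
  imports "HOL-Probability.Probability"
begin

definition alg3_N :: "('a \<Rightarrow> real) \<Rightarrow> (nat \<Rightarrow> 'a \<Rightarrow> real) \<Rightarrow> (nat \<Rightarrow> 'a \<Rightarrow> real) \<Rightarrow> 'a \<Rightarrow> enat" where
  "alg3_N G0 L U \<omega> = (INF n\<in>{n. 1 \<le> n \<and> (G0 \<omega> \<le> L n \<omega> \<or> G0 \<omega> > U n \<omega>)}. enat n)"

definition alg3_C :: "('a \<Rightarrow> real) \<Rightarrow> (nat \<Rightarrow> 'a \<Rightarrow> real) \<Rightarrow> (nat \<Rightarrow> 'a \<Rightarrow> real) \<Rightarrow> 'a \<Rightarrow> nat" where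
  "alg3_C G0 L U \<omega> = (case alg3_N G0 L U \<omega> of
      enat n \<Rightarrow> (if G0 \<omega> \<le> L n \<omega> then 1 else 0)
    | \<infinity> \<Rightarrow> 0)"

end

theory Submission
  imports Defs
begin

lemma (in prob_space) unif_le:
  fixes G X :: "'a \<Rightarrow> real"
  assumes G[measurable]: "G \<in> borel_measurable M"
    and Gu: "distr M lborel G = uniform_measure lborel {0<..<1::real}"
    and X[measurable]: "X \<in> borel_measurable M" and Xb: "AE \<omega> in M. X \<omega> \<in> {0..1}"
    and ind: "indep_var borel G borel X"
  shows "prob {\<omega>\<in>space M. G \<omega> \<le> X \<omega>} = expectation X"
proof -
  let ?PG = "distr M borel G" and ?PX = "distr M borel X"
  have eq: "?PG \<Otimes>\<^sub>M ?PX = distr M (borel \<Otimes>\<^sub>M borel) (\<lambda>x. (G x, X x))"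
    using ind by (simp add: indep_var_distribution_eq)
  have dG: "?PG = uniform_measure lborel {0<..<1::real}"
  proof (rule measure_eqI)
    show "sets ?PG = sets (uniform_measure lborel {0<..<1::real})" by simp
    fix A assume "A \<in> sets ?PG"
    then have A: "A \<in> sets borel" by simp
    have "emeasure ?PG A = emeasure (distr M lborel G) A"
      using A by (simp add: emeasure_distr)
    then show "emeasure ?PG A = emeasure (uniform_measure lborel {0<..<1::real}) A"
      using Gu by simp
  qed
  interpret PG: prob_space ?PG by (rule prob_space_distr) simp
  interpret PX: prob_space ?PX by (rule prob_space_distr) simp
  interpret P2: pair_sigma_finite ?PG ?PX ..
  define S where "S = {p::real\<times>real. fst p \<le> snd p}"
  have S: "S \<in> sets (borel \<Otimes>\<^sub>M borel)"
  proof -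
    have "S = {p \<in> space (borel \<Otimes>\<^sub>M borel). fst p \<le> snd p}"
      by (auto simp: S_def space_pair_measure)
    also have "\<dots> \<in> sets (borel \<Otimes>\<^sub>M borel)" by measurable
    finally show ?thesis .
  qed
  have "prob {\<omega>\<in>space M. G \<omega> \<le> X \<omega>} = measure (distr M (borel \<Otimes>\<^sub>M borel) (\<lambda>x. (G x, X x))) S"
    using S by (subst measure_distr) (auto simp: S_def intro!: arg_cong[where f=prob])
  also have "\<dots> = measure (?PG \<Otimes>\<^sub>M ?PX) S" by (simp add: eq)
  finally have 1: "prob {\<omega>\<in>space M. G \<omega> \<le> X \<omega>} = measure (?PG \<Otimes>\<^sub>M ?PX) S" .
  have "emeasure (?PG \<Otimes>\<^sub>M ?PX) S = (\<integral>\<^sup>+y. emeasure ?PG ((\<lambda>x. (x, y)) -` S) \<partial>?PX)"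
    using S by (intro P2.emeasure_pair_measure_alt2) simp
  also have "\<dots> = (\<integral>\<^sup>+y. ennreal y \<partial>?PX)"
  proof (rule nn_integral_cong_AE)
    have "AE y in ?PX. y \<in> {0..1}"
      using Xb by (subst AE_distr_iff) auto
    then show "AE y in ?PX. emeasure ?PG ((\<lambda>x. (x, y)) -` S) = ennreal y"
    proof eventually_elim
      case (elim y)
      have v: "(\<lambda>x. (x, y)) -` S = {..y}" by (auto simp: S_def)
      show ?case
      proof (cases "y = 1")
        case True
        then have "{0<..<1::real} \<inter> {..y} = {0<..<1}" by auto
        then show ?thesis unfolding v dG using True by simp
      next
        case False
        then have "{0<..<1::real} \<inter> {..y} = {0<..y}" using elim by auto
        then show ?thesis unfolding v dG using elim by (simp add: divide_ennreal_def)
      qed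
    qed
  qed
  also have "\<dots> = (\<integral>\<^sup>+\<omega>. ennreal (X \<omega>) \<partial>M)"
    by (subst nn_integral_distr) auto
  also have "\<dots> = ennreal (expectation X)"
  proof (rule nn_integral_eq_integral)
    show "integrable M X"
      by (rule integrable_const_bound[where B=1]) (use Xb in auto)
    show "AE x in M. 0 \<le> X x" using Xb by auto
  qed
  finally have 2: "emeasure (?PG \<Otimes>\<^sub>M ?PX) S = ennreal (expectation X)" .
  have "0 \<le> expectation X" using Xb by (intro integral_nonneg_AE) auto
  then show ?thesis using 1 2 by (simp add: measure_def)
qed

lemma (in prob_space) indep_LU:
  fixes G :: "'a \<Rightarrow> real" and L U :: "nat \<Rightarrow> 'a \<Rightarrow> real"
  assumes G[measurable]: "G \<in> borel_measurable M"
    and L_meas: "\<And>n. 1 \<le> n \<Longrightarrow> L n \<in> borel_measurable M"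
    and U_meas: "\<And>n. 1 \<le> n \<Longrightarrow> U n \<in> borel_measurable M"
    and ind: "indep_set
        (sets (vimage_algebra (space M) G borel))
        (sets (vimage_algebra (space M) (\<lambda>\<omega>. \<lambda>n\<in>{1..}. (L n \<omega>, U n \<omega>))
                 (PiM {1..} (\<lambda>_. borel :: (real \<times> real) measure))))"
    and n: "1 \<le> n"
  shows "indep_var borel G borel (L n) \<and> indep_var borel G borel (U n)"
proof -
  define F where "F = (\<lambda>\<omega>. \<lambda>n\<in>{1::nat..}. (L n \<omega>, U n \<omega>))"
  have F: "F \<in> measurable M (PiM {1..} (\<lambda>_. borel :: (real \<times> real) measure))"
    unfolding F_def by (rule measurable_restrict) (auto intro!: borel_measurable_Pair L_meas U_meas)
  let ?P = "PiM {1..} (\<lambda>_. borel :: (real \<times> real) measure)"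
  have e1: "sigma_sets (space M) {G -` A \<inter> space M | A. A \<in> sets borel} = sets (vimage_algebra (space M) G borel)"
    using sets.sigma_sets_eq[of "vimage_algebra (space M) G borel"]
    by (simp add: sets_vimage_algebra2)
  have sub: "sigma_sets (space M) {Y -` A \<inter> space M | A. A \<in> sets borel} \<subseteq> sets (vimage_algebra (space M) F ?P)"
    if Ym: "Y \<in> borel_measurable M" and h: "(\<lambda>f. h (f n)) \<in> measurable ?P borel" and Yeq: "\<And>\<omega>. Y \<omega> = h (F \<omega> n)"
    for Y :: "'a \<Rightarrow> real" and h :: "real \<times> real \<Rightarrow> real"
  proof -
    have "{Y -` A \<inter> space M | A. A \<in> sets borel} \<subseteq> sets (vimage_algebra (space M) F ?P)"
    proof safe
      fix A :: "real set" assume A: "A \<in> sets borel"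
      have "Y -` A \<inter> space M = F -` ((\<lambda>f. h (f n)) -` A \<inter> space ?P) \<inter> space M"
        using measurable_space[OF F] by (auto simp: Yeq)
      moreover have "(\<lambda>f. h (f n)) -` A \<inter> space ?P \<in> sets ?P"
        using measurable_sets[OF h A] .
      ultimately show "Y -` A \<inter> space M \<in> sets (vimage_algebra (space M) F ?P)"
        by (simp only:) (rule in_vimage_algebra)
    qed
    then show ?thesis
      using sets.sigma_sets_subset[of _ "vimage_algebra (space M) F ?P"] by simp
  qed
  have m1: "(\<lambda>f. fst (f n)) \<in> measurable ?P borel"
  proof -
    have "fst \<in> borel_measurable (borel :: (real \<times> real) measure)"
      by (intro borel_measurable_continuous_onI continuous_intros)
    then show ?thesis
      using measurable_compose[OF measurable_component_singleton[of n "{1..}" "\<lambda>_. borel :: (real \<times> real) measure"]] n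
      by auto
  qed
  have m2: "(\<lambda>f. snd (f n)) \<in> measurable ?P borel"
  proof -
    have "snd \<in> borel_measurable (borel :: (real \<times> real) measure)"
      by (intro borel_measurable_continuous_onI continuous_intros)
    then show ?thesis
      using measurable_compose[OF measurable_component_singleton[of n "{1..}" "\<lambda>_. borel :: (real \<times> real) measure"]] n
      by auto
  qed
  have mono: "indep_set A' B'" if "indep_set A B" "A' \<subseteq> A" "B' \<subseteq> B" for A B A' B'
    using that unfolding indep_sets2_eq by blast
  have Ln: "L n \<in> borel_measurable M" "U n \<in> borel_measurable M" using n L_meas U_meas by auto
  show ?thesis unfolding indep_var_eq e1
  proof (intro conjI G Ln)
    show "indep_set (sets (vimage_algebra (space M) G borel))
      (sigma_sets (space M) {L n -` A \<inter> space M |A. A \<in> sets borel})"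
      by (rule mono[OF ind[folded F_def] order_refl sub[OF Ln(1) m1]]) (use n in \<open>simp add: F_def\<close>)
    show "indep_set (sets (vimage_algebra (space M) G borel))
      (sigma_sets (space M) {U n -` A \<inter> space M |A. A \<in> sets borel})"
      by (rule mono[OF ind[folded F_def] order_refl sub[OF Ln(2) m2]]) (use n in \<open>simp add: F_def\<close>)
  qed
qed

lemma alg3_N_eq:
  "alg3_N G0 L U \<omega> = (if {n. 1 \<le> n \<and> (G0 \<omega> \<le> L n \<omega> \<or> G0 \<omega> > U n \<omega>)} = {} then \<infinity>
     else enat (LEAST n. 1 \<le> n \<and> (G0 \<omega> \<le> L n \<omega> \<or> G0 \<omega> > U n \<omega>)))"
proof (cases "{n. 1 \<le> n \<and> (G0 \<omega> \<le> L n \<omega> \<or> G0 \<omega> > U n \<omega>)} = {}")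
  case True
  then show ?thesis unfolding alg3_N_def by (simp only: True image_empty INF_empty if_True) (simp add: top_enat_def)
next
  case False
  let ?S = "{n. 1 \<le> n \<and> (G0 \<omega> \<le> L n \<omega> \<or> G0 \<omega> > U n \<omega>)}"
  let ?m = "LEAST n. 1 \<le> n \<and> (G0 \<omega> \<le> L n \<omega> \<or> G0 \<omega> > U n \<omega>)"
  from False obtain k where k: "k \<in> ?S" by blast
  have m: "?m \<in> ?S" unfolding mem_Collect_eq by (rule LeastI, use k in simp)
  have "(INF n\<in>?S. enat n) = enat ?m"
  proof (rule antisym)
    show "(INF n\<in>?S. enat n) \<le> enat ?m" using m by (rule INF_lower)
    show "enat ?m \<le> (INF n\<in>?S. enat n)"
      by (rule INF_greatest) (auto intro: Least_le)
  qed
  then show ?thesis using False unfolding alg3_N_def by simp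
qed

lemma N_gt:
  "enat n < alg3_N G0 L U \<omega> \<longleftrightarrow> (\<forall>k<n. \<not> (G0 \<omega> \<le> L (Suc k) \<omega> \<or> U (Suc k) \<omega> < G0 \<omega>))"
proof -
  let ?P = "\<lambda>n. 1 \<le> n \<and> (G0 \<omega> \<le> L n \<omega> \<or> G0 \<omega> > U n \<omega>)"
  show ?thesis
  proof (cases "{n. ?P n} = {}")
    case True
    then show ?thesis by (subst alg3_N_eq, subst if_P[OF True]) (use True in auto)
  next
    case False
    then obtain k where k: "?P k" by blast
    have m: "?P (LEAST n. ?P n)" using k by (rule LeastI)
    have "n < (LEAST n. ?P n) \<longleftrightarrow> (\<forall>k<n. \<not> ?P (Suc k))"
    proof
      assume "n < (LEAST n. ?P n)"
      then show "\<forall>k<n. \<not> ?P (Suc k)"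
      proof (intro allI impI)
        fix k assume "n < (LEAST n. ?P n)" "k < n"
        then have "Suc k < (LEAST n. ?P n)" by linarith
        then show "\<not> ?P (Suc k)" by (rule not_less_Least)
      qed
    next
      assume H: "\<forall>k<n. \<not> ?P (Suc k)"
      show "n < (LEAST n. ?P n)"
      proof (rule ccontr)
        assume "\<not> n < (LEAST n. ?P n)"
        moreover obtain j where "(LEAST n. ?P n) = Suc j" using m by (cases "LEAST n. ?P n") auto
        ultimately have "j < n" by linarith
        with H have "\<not> ?P (Suc j)" by blast
        with m \<open>(LEAST n. ?P n) = Suc j\<close> show False by simp
      qed
    qed
    moreover have "(\<forall>k<n. \<not> ?P (Suc k)) = (\<forall>k<n. \<not> (G0 \<omega> \<le> L (Suc k) \<omega> \<or> U (Suc k) \<omega> < G0 \<omega>))"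
      by simp
    moreover have "alg3_N G0 L U \<omega> = enat (LEAST n. ?P n)"
      by (subst alg3_N_eq, subst if_not_P[OF False]) (rule refl)
    ultimately show ?thesis by simp
  qed
qed

lemma N_fin:
  assumes "G0 \<omega> \<le> L (Suc k) \<omega> \<or> U (Suc k) \<omega> < G0 \<omega>"
  shows "alg3_N G0 L U \<omega> < \<infinity>"
proof -
  have "Suc k \<in> {n. 1 \<le> n \<and> (G0 \<omega> \<le> L n \<omega> \<or> G0 \<omega> > U n \<omega>)}" using assms by auto
  then have "{n. 1 \<le> n \<and> (G0 \<omega> \<le> L n \<omega> \<or> G0 \<omega> > U n \<omega>)} \<noteq> {}" by blast
  then show ?thesis by (subst alg3_N_eq, subst if_not_P) simp_all
qed

lemma C_iff:
  "alg3_C G0 L U \<omega> = 1 \<longleftrightarrow> (\<exists>m. (G0 \<omega> \<le> L (Suc m) \<omega> \<or> U (Suc m) \<omega> < G0 \<omega>)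
      \<and> (\<forall>k<m. \<not> (G0 \<omega> \<le> L (Suc k) \<omega> \<or> U (Suc k) \<omega> < G0 \<omega>)) \<and> G0 \<omega> \<le> L (Suc m) \<omega>)"
proof -
  let ?P = "\<lambda>n. 1 \<le> n \<and> (G0 \<omega> \<le> L n \<omega> \<or> G0 \<omega> > U n \<omega>)"
  show ?thesis
  proof (cases "{n. ?P n} = {}")
    case True
    have N: "alg3_N G0 L U \<omega> = \<infinity>" by (subst alg3_N_eq, subst if_P[OF True]) (rule refl)
    have C0: "alg3_C G0 L U \<omega> = 0" unfolding alg3_C_def N by simp
    have "\<not> (\<exists>m. (G0 \<omega> \<le> L (Suc m) \<omega> \<or> U (Suc m) \<omega> < G0 \<omega>)
      \<and> (\<forall>k<m. \<not> (G0 \<omega> \<le> L (Suc k) \<omega> \<or> U (Suc k) \<omega> < G0 \<omega>)) \<and> G0 \<omega> \<le> L (Suc m) \<omega>)"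
    proof
      assume "\<exists>m. (G0 \<omega> \<le> L (Suc m) \<omega> \<or> U (Suc m) \<omega> < G0 \<omega>)
      \<and> (\<forall>k<m. \<not> (G0 \<omega> \<le> L (Suc k) \<omega> \<or> U (Suc k) \<omega> < G0 \<omega>)) \<and> G0 \<omega> \<le> L (Suc m) \<omega>"
      then obtain m where "G0 \<omega> \<le> L (Suc m) \<omega> \<or> U (Suc m) \<omega> < G0 \<omega>" by blast
      then have "Suc m \<in> {n. ?P n}" by simp
      with True show False by blast
    qed
    with C0 show ?thesis by simp
  next
    case False
    then obtain k where k: "?P k" by blast
    have m: "?P (LEAST n. ?P n)" using k by (rule LeastI)
    then have "(LEAST n. ?P n) \<noteq> 0" by auto
    then obtain j where j: "(LEAST n. ?P n) = Suc j" using not0_implies_Suc by blast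
    have Pj: "?P (Suc j)" using m j by simp
    have C: "alg3_C G0 L U \<omega> = (if G0 \<omega> \<le> L (Suc j) \<omega> then 1 else 0)"
    proof -
      have N: "alg3_N G0 L U \<omega> = enat (Suc j)"
        by (subst alg3_N_eq, subst if_not_P[OF False]) (simp only: j)
      show ?thesis unfolding alg3_C_def N by simp
    qed
    have min: "\<forall>k<j. \<not> ?P (Suc k)"
    proof (intro allI impI)
      fix k assume "k < j"
      then have "Suc k < (LEAST n. ?P n)" using j by simp
      then show "\<not> ?P (Suc k)" by (rule not_less_Least)
    qed
    show ?thesis
    proof (rule iffI)
      assume "alg3_C G0 L U \<omega> = 1"
      then show "\<exists>m. (G0 \<omega> \<le> L (Suc m) \<omega> \<or> U (Suc m) \<omega> < G0 \<omega>)
      \<and> (\<forall>k<m. \<not> (G0 \<omega> \<le> L (Suc k) \<omega> \<or> U (Suc k) \<omega> < G0 \<omega>)) \<and> G0 \<omega> \<le> L (Suc m) \<omega>"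
      proof (intro exI[of _ j] conjI)
        show "G0 \<omega> \<le> L (Suc j) \<omega>"
        proof (rule ccontr)
          assume "\<not> G0 \<omega> \<le> L (Suc j) \<omega>"
          then have "alg3_C G0 L U \<omega> = 0" unfolding C by (rule if_not_P)
          with \<open>alg3_C G0 L U \<omega> = 1\<close> show False by simp
        qed
        show "G0 \<omega> \<le> L (Suc j) \<omega> \<or> U (Suc j) \<omega> < G0 \<omega>" using Pj by simp
        show "\<forall>k<j. \<not> (G0 \<omega> \<le> L (Suc k) \<omega> \<or> U (Suc k) \<omega> < G0 \<omega>)" using min by simp
      qed
    next
      assume "\<exists>m. (G0 \<omega> \<le> L (Suc m) \<omega> \<or> U (Suc m) \<omega> < G0 \<omega>)
      \<and> (\<forall>k<m. \<not> (G0 \<omega> \<le> L (Suc k) \<omega> \<or> U (Suc k) \<omega> < G0 \<omega>)) \<and> G0 \<omega> \<le> L (Suc m) \<omega>"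
      then obtain i where i0: "(G0 \<omega> \<le> L (Suc i) \<omega> \<or> U (Suc i) \<omega> < G0 \<omega>) \<and>
        (\<forall>k<i. \<not> (G0 \<omega> \<le> L (Suc k) \<omega> \<or> U (Suc k) \<omega> < G0 \<omega>)) \<and> G0 \<omega> \<le> L (Suc i) \<omega>" by (rule exE)
      note i = conjunct1[OF i0] conjunct1[OF conjunct2[OF i0]] conjunct2[OF conjunct2[OF i0]]
      have "i = j"
      proof (rule ccontr)
        assume "i \<noteq> j"
        then consider "i < j" | "j < i" by linarith
        then show False
        proof cases
          case 1 then have "\<not> ?P (Suc i)" using min by (rule_tac allE[OF min, of i]) simp
          then show False using i(1) by simp
        next
          case 2 then have "\<not> (G0 \<omega> \<le> L (Suc j) \<omega> \<or> U (Suc j) \<omega> < G0 \<omega>)" using i(2) by simp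
          then show False using Pj by simp
        qed
      qed
      then show "alg3_C G0 L U \<omega> = 1" using C i(3) by simp
    qed
  qed
qed


lemma mono_LU:
  fixes L U :: "nat \<Rightarrow> 'a \<Rightarrow> real" and k n :: nat
  assumes G: "\<forall>n\<ge>1. L n \<omega> \<le> U n \<omega> \<and> L n \<omega> \<in> {0..1} \<and> U n \<omega> \<in> {0..1}
                        \<and> (n \<ge> 2 \<longrightarrow> L (n - 1) \<omega> \<le> L n \<omega> \<and> U n \<omega> \<le> U (n - 1) \<omega>)"
    and k: "1 \<le> k" "k \<le> n"
  shows "L k \<omega> \<le> L n \<omega> \<and> U n \<omega> \<le> U k \<omega>"
  using k(2)
proof (induction n rule: dec_induct)
  case base then show ?case by simp
next
  case (step m)
  have "Suc m \<ge> 1" "Suc m \<ge> 2" using step k by auto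
  with G have "L m \<omega> \<le> L (Suc m) \<omega> \<and> U (Suc m) \<omega> \<le> U m \<omega>"
    by (metis diff_Suc_1)
  with step show ?case by linarith
qed

theorem lemma2:
  fixes M :: "'a measure" and s :: real
    and L U :: "nat \<Rightarrow> 'a \<Rightarrow> real" and G0 :: "'a \<Rightarrow> real"
  assumes "prob_space M"
    and s: "0 \<le> s" "s \<le> 1"
    and L_meas: "\<And>n. 1 \<le> n \<Longrightarrow> L n \<in> borel_measurable M"
    and U_meas: "\<And>n. 1 \<le> n \<Longrightarrow> U n \<in> borel_measurable M"
    and AE_bounds: "AE \<omega> in M. \<forall>n\<ge>1. L n \<omega> \<le> U n \<omega> \<and> L n \<omega> \<in> {0..1} \<and> U n \<omega> \<in> {0..1}
                        \<and> (n \<ge> 2 \<longrightarrow> L (n - 1) \<omega> \<le> L n \<omega> \<and> U n \<omega> \<le> U (n - 1) \<omega>)"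
    and l_mono: "\<And>n. 1 \<le> n \<Longrightarrow> prob_space.expectation M (L n) \<le> prob_space.expectation M (L (Suc n))"
    and l_lim: "(\<lambda>n. prob_space.expectation M (L n)) \<longlonglongrightarrow> s"
    and u_mono: "\<And>n. 1 \<le> n \<Longrightarrow> prob_space.expectation M (U (Suc n)) \<le> prob_space.expectation M (U n)"
    and u_lim: "(\<lambda>n. prob_space.expectation M (U n)) \<longlonglongrightarrow> s"
    and G0_meas: "G0 \<in> borel_measurable M"
    and G0_unif: "distr M lborel G0 = uniform_measure lborel {0<..<1::real}"
    and G0_indep: "prob_space.indep_set M
        (sets (vimage_algebra (space M) G0 borel))
        (sets (vimage_algebra (space M) (\<lambda>\<omega>. \<lambda>n\<in>{1..}. (L n \<omega>, U n \<omega>))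
                 (PiM {1..} (\<lambda>_. borel :: (real \<times> real) measure))))"
  shows "(AE \<omega> in M. alg3_N G0 L U \<omega> < \<infinity>)
    \<and> measure M {\<omega> \<in> space M. alg3_C G0 L U \<omega> = 1} = s
    \<and> (\<forall>n\<ge>1. measure M {\<omega> \<in> space M. alg3_N G0 L U \<omega> > enat n}
               = prob_space.expectation M (U n) - prob_space.expectation M (L n))"
  
proof -
  interpret prob_space M by fact
  let ?l = "\<lambda>n. expectation (L n)" and ?u = "\<lambda>n. expectation (U n)"
  have Lm[measurable]: "\<And>k. L (Suc k) \<in> borel_measurable M" using L_meas by simp
  have Um[measurable]: "\<And>k. U (Suc k) \<in> borel_measurable M" using U_meas by simp
  note G0_meas[measurable]
  let ?Gd = "\<lambda>\<omega>. \<forall>n\<ge>1. L n \<omega> \<le> U n \<omega> \<and> L n \<omega> \<in> {0..1} \<and> U n \<omega> \<in> {0..1}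
                        \<and> (n \<ge> 2 \<longrightarrow> L (n - 1) \<omega> \<le> L n \<omega> \<and> U n \<omega> \<le> U (n - 1) \<omega>)"
  have Gd: "AE \<omega> in M. ?Gd \<omega>" by (rule AE_bounds)
  have ind: "indep_var borel G0 borel (L (Suc n)) \<and> indep_var borel G0 borel (U (Suc n))" for n
    using indep_LU[OF G0_meas L_meas U_meas G0_indep, of "Suc n"] by simp
  have pL: "prob {\<omega>\<in>space M. G0 \<omega> \<le> L (Suc n) \<omega>} = ?l (Suc n)" for n
  proof (rule unif_le[OF G0_meas G0_unif Lm])
    show "AE \<omega> in M. L (Suc n) \<omega> \<in> {0..1}" using Gd by eventually_elim auto
  qed (use ind in blast)
  have pU: "prob {\<omega>\<in>space M. G0 \<omega> \<le> U (Suc n) \<omega>} = ?u (Suc n)" for n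
  proof (rule unif_le[OF G0_meas G0_unif Um])
    show "AE \<omega> in M. U (Suc n) \<omega> \<in> {0..1}" using Gd by eventually_elim auto
  qed (use ind in blast)
  have pT: "prob {\<omega>\<in>space M. L (Suc n) \<omega> < G0 \<omega> \<and> G0 \<omega> \<le> U (Suc n) \<omega>} = ?u (Suc n) - ?l (Suc n)" for n
  proof -
    let ?A = "{\<omega>\<in>space M. G0 \<omega> \<le> L (Suc n) \<omega>}" and ?B = "{\<omega>\<in>space M. G0 \<omega> \<le> U (Suc n) \<omega>}"
    have A: "?A \<in> events" and B: "?B \<in> events" by measurable
    have "{\<omega>\<in>space M. L (Suc n) \<omega> < G0 \<omega> \<and> G0 \<omega> \<le> U (Suc n) \<omega>} = ?B - ?A" by auto
    then have "prob {\<omega>\<in>space M. L (Suc n) \<omega> < G0 \<omega> \<and> G0 \<omega> \<le> U (Suc n) \<omega>} = prob ?B - prob (?B \<inter> ?A)"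
      using finite_measure_Diff'[OF B A] by simp
    moreover have "prob (?B \<inter> ?A) = prob ?A"
    proof (rule measure_eq_AE)
      show "AE x in M. (x \<in> ?B \<inter> ?A) = (x \<in> ?A)"
        using Gd by eventually_elim (auto dest: spec[of _ "Suc n"])
    qed (use A B in auto)
    ultimately show ?thesis using pL pU by simp
  qed
  have ev: "{\<omega>\<in>space M. L (Suc n) \<omega> < G0 \<omega> \<and> G0 \<omega> \<le> U (Suc n) \<omega>} \<in> events" for n
    by measurable
  have chain: "(\<forall>k<Suc m. \<not> (G0 \<omega> \<le> L (Suc k) \<omega> \<or> U (Suc k) \<omega> < G0 \<omega>)) \<longleftrightarrow>
      (L (Suc m) \<omega> < G0 \<omega> \<and> G0 \<omega> \<le> U (Suc m) \<omega>)" if "?Gd \<omega>" for m \<omega>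
  proof
    assume "\<forall>k<Suc m. \<not> (G0 \<omega> \<le> L (Suc k) \<omega> \<or> U (Suc k) \<omega> < G0 \<omega>)"
    then have "\<not> (G0 \<omega> \<le> L (Suc m) \<omega> \<or> U (Suc m) \<omega> < G0 \<omega>)" by blast
    then show "L (Suc m) \<omega> < G0 \<omega> \<and> G0 \<omega> \<le> U (Suc m) \<omega>" by linarith
  next
    assume H: "L (Suc m) \<omega> < G0 \<omega> \<and> G0 \<omega> \<le> U (Suc m) \<omega>"
    show "\<forall>k<Suc m. \<not> (G0 \<omega> \<le> L (Suc k) \<omega> \<or> U (Suc k) \<omega> < G0 \<omega>)"
    proof (intro allI impI)
      fix k assume "k < Suc m"
      then have "L (Suc k) \<omega> \<le> L (Suc m) \<omega> \<and> U (Suc m) \<omega> \<le> U (Suc k) \<omega>"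
        by (intro mono_LU[where L=L and U=U and \<omega>=\<omega>, OF that]) auto
      with H show "\<not> (G0 \<omega> \<le> L (Suc k) \<omega> \<or> U (Suc k) \<omega> < G0 \<omega>)" by linarith
    qed
  qed
  have part3: "measure M {\<omega> \<in> space M. alg3_N G0 L U \<omega> > enat (Suc m)} = ?u (Suc m) - ?l (Suc m)" for m
  proof -
    have eqs: "{\<omega> \<in> space M. alg3_N G0 L U \<omega> > enat (Suc m)} =
       {\<omega> \<in> space M. \<forall>k<Suc m. \<not> (G0 \<omega> \<le> L (Suc k) \<omega> \<or> U (Suc k) \<omega> < G0 \<omega>)}"
      by (simp only: N_gt)
    have "measure M {\<omega> \<in> space M. \<forall>k<Suc m. \<not> (G0 \<omega> \<le> L (Suc k) \<omega> \<or> U (Suc k) \<omega> < G0 \<omega>)}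
        = prob {\<omega>\<in>space M. L (Suc m) \<omega> < G0 \<omega> \<and> G0 \<omega> \<le> U (Suc m) \<omega>}"
    proof (rule measure_eq_AE)
      show "AE x in M. (x \<in> {\<omega> \<in> space M. \<forall>k<Suc m. \<not> (G0 \<omega> \<le> L (Suc k) \<omega> \<or> U (Suc k) \<omega> < G0 \<omega>)}) =
          (x \<in> {\<omega>\<in>space M. L (Suc m) \<omega> < G0 \<omega> \<and> G0 \<omega> \<le> U (Suc m) \<omega>})"
        using Gd by eventually_elim (use chain in blast)
      show "{\<omega> \<in> space M. \<forall>k<Suc m. \<not> (G0 \<omega> \<le> L (Suc k) \<omega> \<or> U (Suc k) \<omega> < G0 \<omega>)} \<in> events"
        by measurable
    qed (rule ev)
    then show ?thesis unfolding eqs pT .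
  qed
  have P3: "\<forall>n\<ge>1. measure M {\<omega> \<in> space M. alg3_N G0 L U \<omega> > enat n}
               = ?u n - ?l n"
  proof (intro allI impI)
    fix n :: nat assume "1 \<le> n"
    then obtain m where "n = Suc m" using not0_implies_Suc by fastforce
    then show "measure M {\<omega> \<in> space M. alg3_N G0 L U \<omega> > enat n} = ?u n - ?l n"
      using part3[of m] by simp
  qed
  have lims: "(\<lambda>n. ?l (Suc n)) \<longlonglongrightarrow> s" "(\<lambda>n. ?u (Suc n)) \<longlonglongrightarrow> s"
    using LIMSEQ_Suc[OF l_lim] LIMSEQ_Suc[OF u_lim] by auto
  define Z where "Z = {\<omega>\<in>space M. \<forall>n. L (Suc n) \<omega> < G0 \<omega> \<and> G0 \<omega> \<le> U (Suc n) \<omega>}"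
  have Zev: "Z \<in> events" unfolding Z_def by measurable
  have Zle: "prob Z \<le> ?u (Suc n) - ?l (Suc n)" for n
  proof -
    have "prob Z \<le> prob {\<omega>\<in>space M. L (Suc n) \<omega> < G0 \<omega> \<and> G0 \<omega> \<le> U (Suc n) \<omega>}"
      by (rule finite_measure_mono[OF _ ev]) (auto simp: Z_def)
    then show ?thesis using pT by simp
  qed
  have "(\<lambda>n. ?u (Suc n) - ?l (Suc n)) \<longlonglongrightarrow> s - s"
    by (intro tendsto_diff lims)
  then have "prob Z \<le> s - s"
    by (rule LIMSEQ_le_const) (use Zle in blast)
  then have "prob Z = 0" using measure_nonneg[of M Z] by simp
  then have "Z \<in> null_sets M" using Zev by (simp add: emeasure_eq_measure null_sets_def)
  then have AEZ: "AE \<omega> in M. \<omega> \<notin> Z" by (rule AE_not_in)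
  have P1: "AE \<omega> in M. alg3_N G0 L U \<omega> < \<infinity>"
    using AEZ
  proof (rule AE_mp[OF _ AE_I2])
    fix \<omega> assume "\<omega> \<in> space M"
    show "\<omega> \<notin> Z \<longrightarrow> alg3_N G0 L U \<omega> < \<infinity>"
    proof
      assume "\<omega> \<notin> Z"
      with \<open>\<omega> \<in> space M\<close> obtain n where "\<not> (L (Suc n) \<omega> < G0 \<omega> \<and> G0 \<omega> \<le> U (Suc n) \<omega>)"
        unfolding Z_def by blast
      then have "G0 \<omega> \<le> L (Suc n) \<omega> \<or> U (Suc n) \<omega> < G0 \<omega>" by linarith
      then show "alg3_N G0 L U \<omega> < \<infinity>" by (rule N_fin)
    qed
  qed
  define D where "D = (\<lambda>n. {\<omega>\<in>space M. \<exists>k\<le>n. G0 \<omega> \<le> L (Suc k) \<omega>})"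
  have Dev: "D n \<in> events" for n unfolding D_def by measurable
  have Dinc: "incseq D" unfolding incseq_def D_def
  proof (intro allI impI subsetI)
    fix m n :: nat and x assume "m \<le> n" "x \<in> {\<omega> \<in> space M. \<exists>k\<le>m. G0 \<omega> \<le> L (Suc k) \<omega>}"
    then show "x \<in> {\<omega> \<in> space M. \<exists>k\<le>n. G0 \<omega> \<le> L (Suc k) \<omega>}"
      using order_trans by blast
  qed
  have pD: "prob (D n) = ?l (Suc n)" for n
  proof -
    have "prob (D n) = prob {\<omega>\<in>space M. G0 \<omega> \<le> L (Suc n) \<omega>}"
    proof (rule measure_eq_AE)
      show "AE x in M. (x \<in> D n) = (x \<in> {\<omega>\<in>space M. G0 \<omega> \<le> L (Suc n) \<omega>})"
        using Gd
      proof eventually_elim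
        case (elim \<omega>)
        have "(\<exists>k\<le>n. G0 \<omega> \<le> L (Suc k) \<omega>) \<longleftrightarrow> G0 \<omega> \<le> L (Suc n) \<omega>"
        proof
          assume "\<exists>k\<le>n. G0 \<omega> \<le> L (Suc k) \<omega>"
          then obtain k where "k \<le> n" "G0 \<omega> \<le> L (Suc k) \<omega>" by blast
          moreover have "L (Suc k) \<omega> \<le> L (Suc n) \<omega> \<and> U (Suc n) \<omega> \<le> U (Suc k) \<omega>"
            using \<open>k \<le> n\<close> by (intro mono_LU[where L=L and U=U and \<omega>=\<omega>, OF elim]) auto
          ultimately show "G0 \<omega> \<le> L (Suc n) \<omega>" by linarith
        qed blast
        then show ?case by (simp add: D_def)
      qed
    qed (use Dev in auto)
    then show ?thesis using pL by simp
  qed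
  have "(\<lambda>n. prob (D n)) \<longlonglongrightarrow> prob (\<Union>n. D n)"
    by (rule finite_Lim_measure_incseq) (use Dev Dinc in auto)
  then have "(\<lambda>n. ?l (Suc n)) \<longlonglongrightarrow> prob (\<Union>n. D n)" using pD by simp
  then have pU: "prob (\<Union>n. D n) = s" using lims(1) by (rule LIMSEQ_unique)
  have UD: "(\<Union>n. D n) = {\<omega>\<in>space M. \<exists>k. G0 \<omega> \<le> L (Suc k) \<omega>}"
    unfolding D_def by blast
  have Ceq: "{\<omega> \<in> space M. alg3_C G0 L U \<omega> = 1} =
     {\<omega> \<in> space M. \<exists>m. (G0 \<omega> \<le> L (Suc m) \<omega> \<or> U (Suc m) \<omega> < G0 \<omega>)
      \<and> (\<forall>k<m. \<not> (G0 \<omega> \<le> L (Suc k) \<omega> \<or> U (Suc k) \<omega> < G0 \<omega>)) \<and> G0 \<omega> \<le> L (Suc m) \<omega>}"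
    by (simp only: C_iff)
  have P2: "measure M {\<omega> \<in> space M. alg3_C G0 L U \<omega> = 1} = s"
  proof -
    have "measure M {\<omega> \<in> space M. \<exists>m. (G0 \<omega> \<le> L (Suc m) \<omega> \<or> U (Suc m) \<omega> < G0 \<omega>)
      \<and> (\<forall>k<m. \<not> (G0 \<omega> \<le> L (Suc k) \<omega> \<or> U (Suc k) \<omega> < G0 \<omega>)) \<and> G0 \<omega> \<le> L (Suc m) \<omega>}
      = prob {\<omega>\<in>space M. \<exists>k. G0 \<omega> \<le> L (Suc k) \<omega>}"
    proof (rule measure_eq_AE)
      show "AE x in M. (x \<in> {\<omega> \<in> space M. \<exists>m. (G0 \<omega> \<le> L (Suc m) \<omega> \<or> U (Suc m) \<omega> < G0 \<omega>)
      \<and> (\<forall>k<m. \<not> (G0 \<omega> \<le> L (Suc k) \<omega> \<or> U (Suc k) \<omega> < G0 \<omega>)) \<and> G0 \<omega> \<le> L (Suc m) \<omega>}) =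
        (x \<in> {\<omega>\<in>space M. \<exists>k. G0 \<omega> \<le> L (Suc k) \<omega>})"
        using Gd
      proof eventually_elim
        case (elim \<omega>)
        let ?S = "\<lambda>m. G0 \<omega> \<le> L (Suc m) \<omega> \<or> U (Suc m) \<omega> < G0 \<omega>"
        have "(\<exists>m. ?S m \<and> (\<forall>k<m. \<not> ?S k) \<and> G0 \<omega> \<le> L (Suc m) \<omega>) \<longleftrightarrow> (\<exists>k. G0 \<omega> \<le> L (Suc k) \<omega>)"
        proof
          assume "\<exists>m. ?S m \<and> (\<forall>k<m. \<not> ?S k) \<and> G0 \<omega> \<le> L (Suc m) \<omega>"
          then show "\<exists>k. G0 \<omega> \<le> L (Suc k) \<omega>" by blast
        next
          assume "\<exists>k. G0 \<omega> \<le> L (Suc k) \<omega>"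
          then obtain k where k: "G0 \<omega> \<le> L (Suc k) \<omega>" by blast
          then have Sk: "?S k" by simp
          define m where "m = (LEAST m. ?S m)"
          have Sm: "?S m" unfolding m_def by (rule LeastI[of ?S k, OF Sk])
          have mk: "m \<le> k" unfolding m_def by (rule Least_le[of ?S k, OF Sk])
          have min: "\<forall>j<m. \<not> ?S j"
          proof (intro allI impI)
            fix j assume "j < m" then show "\<not> ?S j" unfolding m_def by (rule not_less_Least)
          qed
          have "G0 \<omega> \<le> L (Suc m) \<omega>"
          proof (rule ccontr)
            assume "\<not> G0 \<omega> \<le> L (Suc m) \<omega>"
            with Sm have "U (Suc m) \<omega> < G0 \<omega>" by linarith
            moreover have "L (Suc m) \<omega> \<le> L (Suc k) \<omega> \<and> U (Suc k) \<omega> \<le> U (Suc m) \<omega>"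
              using mk by (intro mono_LU[where L=L and U=U and \<omega>=\<omega>, OF elim]) auto
            moreover have "L (Suc k) \<omega> \<le> U (Suc k) \<omega>" using elim by (metis le_add1 plus_1_eq_Suc)
            ultimately show False using k by linarith
          qed
          with Sm min show "\<exists>m. ?S m \<and> (\<forall>k<m. \<not> ?S k) \<and> G0 \<omega> \<le> L (Suc m) \<omega>" by blast
        qed
        then show ?case by blast
      qed
      show "{\<omega> \<in> space M. \<exists>m. (G0 \<omega> \<le> L (Suc m) \<omega> \<or> U (Suc m) \<omega> < G0 \<omega>)
      \<and> (\<forall>k<m. \<not> (G0 \<omega> \<le> L (Suc k) \<omega> \<or> U (Suc k) \<omega> < G0 \<omega>)) \<and> G0 \<omega> \<le> L (Suc m) \<omega>} \<in> events"
        by measurable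
      show "{\<omega>\<in>space M. \<exists>k. G0 \<omega> \<le> L (Suc k) \<omega>} \<in> events" by measurable
    qed
    then show ?thesis unfolding Ceq using pU UD by simp
  qed
  show ?thesis using P1 P2 P3 by blast
qed

end
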